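(* Let $A$ be a real $m\times n$ matrix of rank $\rho$ with columns $a_1,\ldots,a_n$, and let $A=USV^*$ be its thin singular value decomposition, where $U$ ($m\times\rho$) and $V$ ($n\times\rho$) have orthonormal columns and $S=\mathrm{diag}(s_1,\ldots,s_\rho)$ with $s_1\ge\cdots\ge s_\rho\ge 0$; set $s_{\rho+1}:=0$. For $k\in[\rho]$ let $U_{[k]}$ denote the $m\times k$ matrix of the first $k$ columns of $U$ and define $F_k:\mathbb R^m\to\mathbb R^k$ by $F_k(v)=(U_{[k]})^*v$. Then $$\sup_{i,j\in[n]}\Big|\,\|a_i-a_j\|-\|F_k(a_i)-F_k(a_j)\|\,\Big|\le 2s_{k+1},$$ i.e. $F_k$ is a $2s_{k+1}$-distortion of the set of columns of $A$.
   Context: Norms on vectors are Euclidean; $[k]=\{1,\ldots,k\}$; $^*$ denotes transpose. A map $F$ on a set $\mathcal A$ is a $\mu$-distortion of $\mathcal A$ if $\sup_{x,y\in\mathcal A}|\,\|x-y\|-\|F(x)-F(y)\|\,|\le\mu$. *)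

theory Defs
  imports "Jordan_Normal_Form.DL_Rank"
begin

definition enorm :: "real vec \<Rightarrow> real" where
  "enorm v = sqrt (v \<bullet> v)"

definition is_distortion :: "(real vec \<Rightarrow> real vec) \<Rightarrow> real vec set \<Rightarrow> real \<Rightarrow> bool" where
  "is_distortion F X mu \<longleftrightarrow>
     (\<forall>x\<in>X. \<forall>y\<in>X. \<bar>enorm (x - y) - enorm (F x - F y)\<bar> \<le> mu)"

definition first_cols :: "real mat \<Rightarrow> nat \<Rightarrow> real mat" where
  "first_cols U k = mat (dim_row U) k (\<lambda>(i,j). U $$ (i,j))"

end

theory Submission imports Defs "HOL-Analysis.L2_Norm"
begin

lemma sp_self: "v \<bullet> (v::real vec) = (\<Sum>t\<in>{0..<dim_vec v}. (v$t)^2)"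
  unfolding scalar_prod_def by (simp add: power2_eq_square)

lemma enorm_L2: "enorm v = L2_set (\<lambda>t. v$t) {0..<dim_vec v}"
  unfolding enorm_def L2_set_def sp_self ..

lemma orth_norm:
  fixes U :: "real mat"
  assumes U: "U \<in> carrier_mat m r" and O: "transpose_mat U * U = 1\<^sub>m r"
    and z: "z \<in> carrier_vec r"
  shows "(U *\<^sub>v z) \<bullet> (U *\<^sub>v z) = z \<bullet> z"
proof -
  have "(U *\<^sub>v z) \<bullet> (U *\<^sub>v z) = (transpose_mat U *\<^sub>v (U *\<^sub>v z)) \<bullet> z"
    using transpose_vec_mult_scalar[OF U z, of "U *\<^sub>v z"] U z by simp
  also have "transpose_mat U *\<^sub>v (U *\<^sub>v z) = (transpose_mat U * U) *\<^sub>v z"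
    using U z by (subst assoc_mult_mat_vec[of _ r m _ r]) auto
  also have "\<dots> = z" using O z by simp
  finally show ?thesis .
qed

lemma sq_expand:
  fixes p q :: "nat \<Rightarrow> real"
  shows "(\<Sum>t\<in>S. (p t - q t)^2) = (\<Sum>t\<in>S. (p t)^2) - 2 * (\<Sum>t\<in>S. p t * q t) + (\<Sum>t\<in>S. (q t)^2)"
  by (simp add: power2_diff sum.distrib sum_subtractf sum_distrib_left algebra_simps)

lemma bessel:
  fixes V :: "real mat"
  assumes V: "V \<in> carrier_mat n r" and O: "transpose_mat V * V = 1\<^sub>m r" and i: "i < n"
  shows "(\<Sum>l\<in>{0..<r}. (V $$ (i,l))^2) \<le> 1"
proof -
  define x where "x = row V i"
  have x: "x \<in> carrier_vec r" using V x_def by auto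
  have xx: "x \<bullet> x = (\<Sum>l\<in>{0..<r}. (V $$ (i,l))^2)"
    using x V i unfolding x_def by (simp add: sp_self)
  define e :: "real vec" where "e = unit_vec n i"
  define w where "w = V *\<^sub>v x"
  have w: "w \<in> carrier_vec n" using V x w_def by auto
  have "0 \<le> (\<Sum>t\<in>{0..<n}. (e$t - w$t)^2)" by (simp add: sum_nonneg)
  also have "\<dots> = (\<Sum>t\<in>{0..<n}. (e$t)^2) - 2 * (\<Sum>t\<in>{0..<n}. e$t * w$t) + (\<Sum>t\<in>{0..<n}. (w$t)^2)"
    by (rule sq_expand)
  also have "(\<Sum>t\<in>{0..<n}. (e$t)^2) = 1"
  proof -
    have "(\<Sum>t\<in>{0..<n}. (e$t)^2) = (\<Sum>t\<in>{0..<n}. if t = i then 1 else 0)"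
      using i by (intro sum.cong) (auto simp: e_def unit_vec_def)
    then show ?thesis using i by simp
  qed
  also have "(\<Sum>t\<in>{0..<n}. e$t * w$t) = w $ i"
  proof -
    have "(\<Sum>t\<in>{0..<n}. e$t * w$t) = (\<Sum>t\<in>{0..<n}. if t = i then w$t else 0)"
      using i by (intro sum.cong) (auto simp: e_def unit_vec_def)
    then show ?thesis using i by simp
  qed
  also have "w $ i = x \<bullet> x"
    using i V x unfolding w_def x_def by simp
  also have "(\<Sum>t\<in>{0..<n}. (w$t)^2) = w \<bullet> w" using w by (simp add: sp_self)
  also have "w \<bullet> w = x \<bullet> x" unfolding w_def by (rule orth_norm[OF V O x])
  finally show ?thesis using xx by simp
qed

lemma first_cols_proj:
  fixes U :: "real mat"
  assumes U: "U \<in> carrier_mat m r" and O: "transpose_mat U * U = 1\<^sub>m r"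
    and z: "z \<in> carrier_vec r" and kr: "k \<le> r"
  shows "transpose_mat (first_cols U k) *\<^sub>v (U *\<^sub>v z) = vec k (\<lambda>l. z $ l)"
proof (rule eq_vecI)
  have Uk: "first_cols U k \<in> carrier_mat m k" using U unfolding first_cols_def by auto
  show "dim_vec (transpose_mat (first_cols U k) *\<^sub>v (U *\<^sub>v z)) = dim_vec (vec k (\<lambda>l. z $ l))"
    using Uk by simp
  fix l assume "l < dim_vec (vec k (\<lambda>l. z $ l))"
  then have l: "l < k" by simp
  have c: "col (first_cols U k) l = col U l"
    using U l kr unfolding first_cols_def col_def by (intro eq_vecI) auto
  have "transpose_mat U *\<^sub>v (U *\<^sub>v z) = (transpose_mat U * U) *\<^sub>v z"
    using U z by (subst assoc_mult_mat_vec[of _ r m _ r]) auto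
  also have "\<dots> = z" using O z by simp
  finally have e: "transpose_mat U *\<^sub>v (U *\<^sub>v z) = z" .
  have "(transpose_mat U *\<^sub>v (U *\<^sub>v z)) $ l = col U l \<bullet> (U *\<^sub>v z)"
    using U l kr by simp
  then have "col U l \<bullet> (U *\<^sub>v z) = z $ l" using e by simp
  then show "(transpose_mat (first_cols U k) *\<^sub>v (U *\<^sub>v z)) $ l = vec k (\<lambda>l. z $ l) $ l"
    using Uk l c by simp
qed

lemma col_svd:
  fixes U V :: "real mat"
  assumes U: "U \<in> carrier_mat m r" and V: "V \<in> carrier_mat n r" and i: "i < n"
  shows "col (U * mat r r (\<lambda>(i,j). if i = j then s (i + 1) else 0) * transpose_mat V) i
       = U *\<^sub>v vec r (\<lambda>l. s (l+1) * V $$ (i,l))"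
proof -
  define D :: "real mat" where "D = mat r r (\<lambda>(i,j). if i = j then s (i + 1) else 0)"
  have D: "D \<in> carrier_mat r r" unfolding D_def by simp
  have "col (U * D * transpose_mat V) i = (U * D) *\<^sub>v col (transpose_mat V) i"
    using U D V i by (intro col_mult2[of _ m r _ n]) auto
  also have "col (transpose_mat V) i = row V i" using V i by simp
  also have "(U * D) *\<^sub>v row V i = U *\<^sub>v (D *\<^sub>v row V i)"
    using U D V by (intro assoc_mult_mat_vec[of _ m r _ r]) auto
  also have "D *\<^sub>v row V i = vec r (\<lambda>l. s (l+1) * V $$ (i,l))"
  proof (rule eq_vecI)
    fix l assume "l < dim_vec (vec r (\<lambda>l. s (l+1) * V $$ (i,l)))"
    then have l: "l < r" by simp
    have "(D *\<^sub>v row V i) $ l = (\<Sum>t\<in>{0..<r}. D $$ (l,t) * V $$ (i,t))"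
      using l D V i by (auto simp: scalar_prod_def intro!: sum.cong)
    also have "\<dots> = (\<Sum>t\<in>{0..<r}. if t = l then s (l+1) * V $$ (i,l) else 0)"
      using l by (intro sum.cong) (auto simp: D_def)
    also have "\<dots> = s (l+1) * V $$ (i,l)" using l by simp
    finally show "(D *\<^sub>v row V i) $ l = vec r (\<lambda>l. s (l+1) * V $$ (i,l)) $ l" using l by simp
  qed (use D in simp)
  finally show ?thesis unfolding D_def .
qed

theorem lemma2:
  fixes A U V :: "real mat" and s :: "nat \<Rightarrow> real" and m n \<rho> k :: nat
  assumes A_dim: "A \<in> carrier_mat m n"
    and rank: "vec_space.rank m A = \<rho>"
    and U_dim: "U \<in> carrier_mat m \<rho>"
    and V_dim: "V \<in> carrier_mat n \<rho>"
    and U_orth: "transpose_mat U * U = 1\<^sub>m \<rho>"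
    and V_orth: "transpose_mat V * V = 1\<^sub>m \<rho>"
    and s_mono: "\<And>i j. 1 \<le> i \<Longrightarrow> i \<le> j \<Longrightarrow> j \<le> \<rho> \<Longrightarrow> s j \<le> s i"
    and s_nonneg: "\<And>i. 1 \<le> i \<Longrightarrow> i \<le> \<rho> \<Longrightarrow> 0 \<le> s i"
    and s_last: "s (\<rho> + 1) = 0"
    and svd: "A = U * mat \<rho> \<rho> (\<lambda>(i,j). if i = j then s (i + 1) else 0) * transpose_mat V"
    and k: "1 \<le> k" "k \<le> \<rho>"
  shows "is_distortion (\<lambda>v. transpose_mat (first_cols U k) *\<^sub>v v) (set (cols A)) (2 * s (k + 1))"
proof -
  define y where "y i = vec \<rho> (\<lambda>l. s (l+1) * V $$ (i,l))" for i
  have y: "y i \<in> carrier_vec \<rho>" for i unfolding y_def by simp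
  have colA: "col A i = U *\<^sub>v y i" if "i < n" for i
    unfolding svd y_def using col_svd[OF U_dim V_dim that] .
  have sk: "0 \<le> s (k+1)"
    using s_nonneg[of "k+1"] s_last k by (cases "k = \<rho>") auto
  have sl: "0 \<le> s (l+1) \<and> s (l+1) \<le> s (k+1)" if "k \<le> l" "l < \<rho>" for l
    using s_mono[of "k+1" "l+1"] s_nonneg[of "l+1"] that by auto
  have tail: "L2_set (\<lambda>l. y i $ l) {k..<\<rho>} \<le> s (k+1)" if i: "i < n" for i
  proof -
    have "L2_set (\<lambda>l. y i $ l) {k..<\<rho>} = L2_set (\<lambda>l. \<bar>y i $ l\<bar>) {k..<\<rho>}"
      unfolding L2_set_def by simp
    also have "\<dots> \<le> L2_set (\<lambda>l. s (k+1) * \<bar>V $$ (i,l)\<bar>) {k..<\<rho>}"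
      by (rule L2_set_mono) (use sl in \<open>auto simp: y_def abs_mult intro: mult_right_mono\<close>)
    also have "\<dots> = s (k+1) * L2_set (\<lambda>l. \<bar>V $$ (i,l)\<bar>) {k..<\<rho>}"
      by (rule L2_set_right_distrib[symmetric, OF sk])
    also have "L2_set (\<lambda>l. \<bar>V $$ (i,l)\<bar>) {k..<\<rho>} \<le> 1"
    proof -
      have "(\<Sum>l\<in>{k..<\<rho>}. (\<bar>V $$ (i,l)\<bar>)^2) \<le> (\<Sum>l\<in>{0..<\<rho>}. (V $$ (i,l))^2)"
        by (simp, rule sum_mono2) auto
      also have "\<dots> \<le> 1" by (rule bessel[OF V_dim V_orth i])
      finally show ?thesis unfolding L2_set_def by simp
    qed
    then have "s (k+1) * L2_set (\<lambda>l. \<bar>V $$ (i,l)\<bar>) {k..<\<rho>} \<le> s (k+1)"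
      using sk by (simp add: mult_left_le)
    finally show ?thesis .
  qed
  show ?thesis unfolding is_distortion_def
  proof (intro ballI)
    fix c1 c2 assume "c1 \<in> set (cols A)" "c2 \<in> set (cols A)"
    then obtain i j where i: "i < n" and j: "j < n" and c1: "c1 = col A i" and c2: "c2 = col A j"
      using A_dim by (auto simp: in_set_conv_nth)
    define z where "z = y i - y j"
    have z: "z \<in> carrier_vec \<rho>" unfolding z_def using y by simp
    have d: "c1 - c2 = U *\<^sub>v z"
      unfolding c1 c2 colA[OF i] colA[OF j] z_def
      by (rule mult_minus_distrib_mat_vec[symmetric, OF U_dim y y])
    have F: "transpose_mat (first_cols U k) *\<^sub>v c1 - transpose_mat (first_cols U k) *\<^sub>v c2
           = vec k (\<lambda>l. z $ l)"
      unfolding c1 c2 colA[OF i] colA[OF j] first_cols_proj[OF U_dim U_orth y k(2)] z_def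
      using k by (intro eq_vecI) (auto simp: y_def)
    have n1: "enorm (c1 - c2) = L2_set (\<lambda>l. z $ l) {0..<\<rho>}"
      unfolding enorm_def d orth_norm[OF U_dim U_orth z] L2_set_def using z by (simp add: sp_self)
    have n2: "enorm (vec k (\<lambda>l. z $ l)) = L2_set (\<lambda>l. z $ l) {0..<k}"
      by (simp add: enorm_L2 cong: L2_set_cong_simp)
    define a where "a = (\<Sum>l\<in>{0..<k}. (z $ l)^2)"
    define b where "b = (\<Sum>l\<in>{k..<\<rho>}. (z $ l)^2)"
    have split: "(\<Sum>l\<in>{0..<\<rho>}. (z $ l)^2) = a + b"
      unfolding a_def b_def using k by (subst sum.atLeastLessThan_concat[symmetric]) auto
    have a0: "0 \<le> a" and b0: "0 \<le> b" unfolding a_def b_def by (auto intro: sum_nonneg)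
    have low: "sqrt a \<le> sqrt (a + b)" using b0 by simp
    have up: "sqrt (a + b) \<le> sqrt a + sqrt b" by (rule sqrt_add_le_add_sqrt[OF a0 b0])
    have "sqrt b = L2_set (\<lambda>l. y i $ l + (- (y j $ l))) {k..<\<rho>}"
      unfolding b_def L2_set_def z_def
      by (intro arg_cong[where f=sqrt] sum.cong) (auto simp: y_def)
    also have "\<dots> \<le> L2_set (\<lambda>l. y i $ l) {k..<\<rho>} + L2_set (\<lambda>l. - (y j $ l)) {k..<\<rho>}"
      by (rule L2_set_triangle_ineq)
    also have "L2_set (\<lambda>l. - (y j $ l)) {k..<\<rho>} = L2_set (\<lambda>l. y j $ l) {k..<\<rho>}"
      unfolding L2_set_def by simp
    finally have "sqrt b \<le> 2 * s (k+1)" using tail[OF i] tail[OF j] by simp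
    then show "\<bar>enorm (c1 - c2) - enorm (transpose_mat (first_cols U k) *\<^sub>v c1 -
                transpose_mat (first_cols U k) *\<^sub>v c2)\<bar> \<le> 2 * s (k + 1)"
      unfolding F n1 n2 L2_set_def split a_def[symmetric] using low up by simp
  qed
qed

end
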